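(* Let $X$ be a complex Banach space, $\mathcal{F}$ an algebra with unit, $\Phi:\mathcal{F}\to\mathcal{C}(X)$ a proto-calculus, $\mathcal{B}:=\{b\in\mathcal{F}:\Phi(b)\in\mathcal{L}(X)\}$, and let $(\mathcal{F}',\Phi')$ be the dual calculus associated with $\Phi$. Let $f\in\mathcal{F}'$ and $$D_f:=\mathrm{span}\{\Phi(e)x: x\in X,\ e\in\mathcal{B},\ fe\in\mathcal{B}\}.$$ Then: (a) $D_f$ is dense in $X$ and $D_f\subseteq\mathrm{dom}(\Phi(f))$; in particular $\Phi(f)$ is densely defined. (b) $\Phi(f)'\subseteq\Phi'(f)$, with equality if and only if $D_f$ is a core for $\Phi(f)$. (c) $\Phi(f)$ is bounded if and only if $\Phi'(f)$ is bounded; in this case $\Phi'(f)=\Phi(f)'$.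
   Context: $\mathcal{F}$ need not be commutative. $\mathcal{L}(X)$, $\mathcal{C}(X)$: bounded, resp. closed linear operators; operator inclusions are graph inclusions, sums/products have natural domains, "$Tx=y$" means $x\in\mathrm{dom}(T)$, $Tx=y$; $T'$ denotes the Banach space adjoint of an operator $T$ on $X$ (acting on the dual space $X'$). A proto-calculus is a map $\Phi:\mathcal{F}\to\mathcal{C}(X)$ with (FC1) $\Phi(\mathbf{1})=I$; (FC2) $\lambda\Phi(f)\subseteq\Phi(\lambda f)$, $\Phi(f)+\Phi(g)\subseteq\Phi(f+g)$; (FC3) $\Phi(f)\Phi(g)\subseteq\Phi(fg)$, $\mathrm{dom}(\Phi(f)\Phi(g))=\mathrm{dom}(\Phi(g))\cap\mathrm{dom}(\Phi(fg))$. Dual calculus: $\mathcal{B}$ is a unital subalgebra and $b\mapsto\Phi(b)'$ is a homomorphism from $\mathcal{B}$ with the opposite multiplication $f\cdot_{\mathrm{op}}g=gf$ into $\mathcal{L}(X')$. Let $\mathcal{F}'$ be the set of $f\in\mathcal{F}$ such that for every $d\in\mathcal{B}$ one has $\bigcap\{\ker\Phi(e)': e\in\mathcal{B},\ fde\in\mathcal{B}\}=\{0\}$ (with this set of $e$ nonempty). For $f\in\mathcal{F}'$ the operator $\Phi'(f)$ on $X'$ is defined by: $\Phi'(f)x'=y'$ iff $\Phi(fe)'x'=\Phi(e)'y'$ for all $e\in\mathcal{B}$ with $fe\in\mathcal{B}$. (This $\Phi'$ is a calculus on $\mathcal{F}'$ with the opposite multiplication and extends $b\mapsto\Phi(b)'$.)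 A subspace $D\subseteq\mathrm{dom}(T)$ is a core for a closed operator $T$ if the closure of $T|_D$ is $T$. *)

theory Defs
  imports "HOL-Analysis.Analysis"
begin

section \<open>Complex Banach spaces, encoded as real Banach spaces with a compatible complex scalar multiplication\<close>

definition cbanach :: "(complex \<Rightarrow> 'x::banach \<Rightarrow> 'x) \<Rightarrow> bool" where
  "cbanach sc \<longleftrightarrow> vector_space sc
     \<and> (\<forall>r x. sc (complex_of_real r) x = r *\<^sub>R x)
     \<and> (\<forall>c x. norm (sc c x) = cmod c * norm x)"

definition cspan :: "(complex \<Rightarrow> 'x::banach \<Rightarrow> 'x) \<Rightarrow> 'x set \<Rightarrow> 'x set" where
  "cspan sc S = module.span sc S"

definition cdual :: "(complex \<Rightarrow> 'x::banach \<Rightarrow> 'x) \<Rightarrow> ('x \<Rightarrow> complex) set" where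
  "cdual sc = {\<phi>. Vector_Spaces.linear sc (*) \<phi> \<and> (\<exists>K. \<forall>x. cmod (\<phi> x) \<le> K * norm x)}"

definition dnorm :: "('x::banach \<Rightarrow> complex) \<Rightarrow> real" where
  "dnorm \<phi> = Sup {cmod (\<phi> x) | x. norm x \<le> 1}"

section \<open>Operators on X as graphs\<close>

definition lin_rel :: "(complex \<Rightarrow> 'x::banach \<Rightarrow> 'x) \<Rightarrow> ('x \<times> 'x) set \<Rightarrow> bool" where
  "lin_rel sc T \<longleftrightarrow> (0, 0) \<in> T
     \<and> (\<forall>x y u v. (x, y) \<in> T \<longrightarrow> (u, v) \<in> T \<longrightarrow> (x + u, y + v) \<in> T)
     \<and> (\<forall>c x y. (x, y) \<in> T \<longrightarrow> (sc c x, sc c y) \<in> T)"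

definition closed_op :: "(complex \<Rightarrow> 'x::banach \<Rightarrow> 'x) \<Rightarrow> ('x \<times> 'x) set \<Rightarrow> bool" where
  "closed_op sc T \<longleftrightarrow> lin_rel sc T \<and> (\<forall>y. (0, y) \<in> T \<longrightarrow> y = 0) \<and> closed T"

definition bounded_op :: "(complex \<Rightarrow> 'x::banach \<Rightarrow> 'x) \<Rightarrow> ('x \<times> 'x) set \<Rightarrow> bool" where
  "bounded_op sc T \<longleftrightarrow> closed_op sc T \<and> Domain T = UNIV
     \<and> (\<exists>K. \<forall>x y. (x, y) \<in> T \<longrightarrow> norm y \<le> K * norm x)"

definition op_smul :: "(complex \<Rightarrow> 'x \<Rightarrow> 'x) \<Rightarrow> complex \<Rightarrow> ('x \<times> 'x) set \<Rightarrow> ('x \<times> 'x) set" where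
  "op_smul sc c T = {(x, sc c y) | x y. (x, y) \<in> T}"

definition op_add :: "('x \<times> 'x::plus) set \<Rightarrow> ('x \<times> 'x) set \<Rightarrow> ('x \<times> 'x) set" where
  "op_add T S = {(x, y + z) | x y z. (x, y) \<in> T \<and> (x, z) \<in> S}"

text \<open>Operator product \<open>T S\<close> (first S, then T), with natural domain.\<close>
definition op_mult :: "('x \<times> 'x) set \<Rightarrow> ('x \<times> 'x) set \<Rightarrow> ('x \<times> 'x) set" where
  "op_mult T S = S O T"

definition adj :: "(complex \<Rightarrow> 'x::banach \<Rightarrow> 'x) \<Rightarrow> ('x \<times> 'x) set
    \<Rightarrow> (('x \<Rightarrow> complex) \<times> ('x \<Rightarrow> complex)) set" where
  "adj sc T = {(x', y'). x' \<in> cdual sc \<and> y' \<in> cdual sc \<and> (\<forall>x y. (x, y) \<in> T \<longrightarrow> x' y = y' x)}"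

definition dual_smul :: "complex \<Rightarrow> (('x \<Rightarrow> complex) \<times> ('x \<Rightarrow> complex)) set
    \<Rightarrow> (('x \<Rightarrow> complex) \<times> ('x \<Rightarrow> complex)) set" where
  "dual_smul c S = {(x', (\<lambda>x. c * y' x)) | x' y'. (x', y') \<in> S}"

definition dual_add :: "(('x \<Rightarrow> complex) \<times> ('x \<Rightarrow> complex)) set
    \<Rightarrow> (('x \<Rightarrow> complex) \<times> ('x \<Rightarrow> complex)) set \<Rightarrow> (('x \<Rightarrow> complex) \<times> ('x \<Rightarrow> complex)) set" where
  "dual_add S R = {(x', (\<lambda>x. y' x + z' x)) | x' y' z'. (x', y') \<in> S \<and> (x', z') \<in> R}"

definition bounded_dop :: "(complex \<Rightarrow> 'x::banach \<Rightarrow> 'x)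
    \<Rightarrow> (('x \<Rightarrow> complex) \<times> ('x \<Rightarrow> complex)) set \<Rightarrow> bool" where
  "bounded_dop sc S \<longleftrightarrow> S \<subseteq> cdual sc \<times> cdual sc \<and> Domain S = cdual sc
     \<and> (\<forall>x' y' u' v'. (x', y') \<in> S \<longrightarrow> (u', v') \<in> S \<longrightarrow> ((\<lambda>x. x' x + u' x), (\<lambda>x. y' x + v' x)) \<in> S)
     \<and> (\<forall>c x' y'. (x', y') \<in> S \<longrightarrow> ((\<lambda>x. c * x' x), (\<lambda>x. c * y' x)) \<in> S)
     \<and> (\<forall>y'. ((\<lambda>_. 0), y') \<in> S \<longrightarrow> y' = (\<lambda>_. 0))
     \<and> (\<exists>K. \<forall>x' y'. (x', y') \<in> S \<longrightarrow> dnorm y' \<le> K * dnorm x')"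

text \<open>A unital complex algebra (not necessarily commutative): a \<open>ring_1\<close> with a compatible complex scalar multiplication.\<close>
definition calgebra :: "(complex \<Rightarrow> 'f::ring_1 \<Rightarrow> 'f) \<Rightarrow> bool" where
  "calgebra smF \<longleftrightarrow> vector_space smF
     \<and> (\<forall>c a b. smF c (a * b) = smF c a * b \<and> smF c (a * b) = a * smF c b)"

definition proto_calculus :: "(complex \<Rightarrow> 'x::banach \<Rightarrow> 'x) \<Rightarrow> (complex \<Rightarrow> 'f::ring_1 \<Rightarrow> 'f)
    \<Rightarrow> ('f \<Rightarrow> ('x \<times> 'x) set) \<Rightarrow> bool" where
  "proto_calculus sc smF \<Phi> \<longleftrightarrow> (\<forall>f. closed_op sc (\<Phi> f))
     \<and> \<Phi> 1 = Id
     \<and> (\<forall>c f. op_smul sc c (\<Phi> f) \<subseteq> \<Phi> (smF c f))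
     \<and> (\<forall>f g. op_add (\<Phi> f) (\<Phi> g) \<subseteq> \<Phi> (f + g))
     \<and> (\<forall>f g. op_mult (\<Phi> f) (\<Phi> g) \<subseteq> \<Phi> (f * g)
            \<and> Domain (op_mult (\<Phi> f) (\<Phi> g)) = Domain (\<Phi> g) \<inter> Domain (\<Phi> (f * g)))"

definition bdd_set :: "(complex \<Rightarrow> 'x::banach \<Rightarrow> 'x) \<Rightarrow> ('f \<Rightarrow> ('x \<times> 'x) set) \<Rightarrow> 'f set" where
  "bdd_set sc \<Phi> = {b. bounded_op sc (\<Phi> b)}"

text \<open>Hypotheses of a dual calculus: \<open>\<B>\<close> is a unital subalgebra and \<open>b \<mapsto> \<Phi>(b)'\<close> is a
  homomorphism from \<open>\<B>\<close> with opposite multiplication into \<open>\<L>(X')\<close>.\<close>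
definition dual_calculus :: "(complex \<Rightarrow> 'x::banach \<Rightarrow> 'x) \<Rightarrow> (complex \<Rightarrow> 'f::ring_1 \<Rightarrow> 'f)
    \<Rightarrow> ('f \<Rightarrow> ('x \<times> 'x) set) \<Rightarrow> bool" where
  "dual_calculus sc smF \<Phi> \<longleftrightarrow>
     (let B = bdd_set sc \<Phi> in
        1 \<in> B \<and> (\<forall>a\<in>B. \<forall>b\<in>B. a + b \<in> B \<and> a * b \<in> B) \<and> (\<forall>c. \<forall>a\<in>B. smF c a \<in> B)
      \<and> (\<forall>b\<in>B. bounded_dop sc (adj sc (\<Phi> b)))
      \<and> adj sc (\<Phi> 1) = Id_on (cdual sc)
      \<and> (\<forall>a\<in>B. \<forall>b\<in>B. adj sc (\<Phi> (a + b)) = dual_add (adj sc (\<Phi> a)) (adj sc (\<Phi> b)))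
      \<and> (\<forall>c. \<forall>a\<in>B. adj sc (\<Phi> (smF c a)) = dual_smul c (adj sc (\<Phi> a)))
      \<and> (\<forall>a\<in>B. \<forall>b\<in>B. adj sc (\<Phi> (b * a)) = op_mult (adj sc (\<Phi> a)) (adj sc (\<Phi> b))))"

definition dual_dom :: "(complex \<Rightarrow> 'x::banach \<Rightarrow> 'x) \<Rightarrow> ('f::ring_1 \<Rightarrow> ('x \<times> 'x) set) \<Rightarrow> 'f set" where
  "dual_dom sc \<Phi> = {f. \<forall>d \<in> bdd_set sc \<Phi>.
      {e \<in> bdd_set sc \<Phi>. f * d * e \<in> bdd_set sc \<Phi>} \<noteq> {}
    \<and> (\<forall>x' \<in> cdual sc. (\<forall>e \<in> bdd_set sc \<Phi>. f * d * e \<in> bdd_set sc \<Phi> \<longrightarrow> (x', (\<lambda>_. 0)) \<in> adj sc (\<Phi> e))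
          \<longrightarrow> x' = (\<lambda>_. 0))}"

definition dual_op :: "(complex \<Rightarrow> 'x::banach \<Rightarrow> 'x) \<Rightarrow> ('f::ring_1 \<Rightarrow> ('x \<times> 'x) set) \<Rightarrow> 'f
    \<Rightarrow> (('x \<Rightarrow> complex) \<times> ('x \<Rightarrow> complex)) set" where
  "dual_op sc \<Phi> f = {(x', y'). x' \<in> cdual sc \<and> y' \<in> cdual sc \<and>
     (\<forall>e \<in> bdd_set sc \<Phi>. f * e \<in> bdd_set sc \<Phi> \<longrightarrow>
        (\<exists>z. (x', z) \<in> adj sc (\<Phi> (f * e)) \<and> (y', z) \<in> adj sc (\<Phi> e)))}"

definition Dset :: "(complex \<Rightarrow> 'x::banach \<Rightarrow> 'x) \<Rightarrow> ('f::ring_1 \<Rightarrow> ('x \<times> 'x) set) \<Rightarrow> 'f \<Rightarrow> 'x set" where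
  "Dset sc \<Phi> f = cspan sc {y. \<exists>x e. e \<in> bdd_set sc \<Phi> \<and> f * e \<in> bdd_set sc \<Phi> \<and> (x, y) \<in> \<Phi> e}"

definition is_core :: "'x::banach set \<Rightarrow> ('x \<times> 'x) set \<Rightarrow> bool" where
  "is_core D T \<longleftrightarrow> D \<subseteq> Domain T \<and> closure (T \<inter> (D \<times> UNIV)) = T"

end

theory Submission
  imports Defs
begin

definition hb_good :: "real \<Rightarrow> ('a::real_normed_vector \<times> real) set \<Rightarrow> bool" where
 "hb_good C H \<longleftrightarrow> (0,0) \<in> H \<and> (\<forall>x a y b. (x,a)\<in>H \<longrightarrow> (y,b)\<in>H \<longrightarrow> (x+y,a+b)\<in>H)
    \<and> (\<forall>r x a. (x,a)\<in>H \<longrightarrow> (r *\<^sub>R x, r*a)\<in>H) \<and> (\<forall>x a. (x,a)\<in>H \<longrightarrow> a \<le> C * norm x)"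

lemma hb_good_fun:
  assumes "hb_good C H" "(x,a)\<in>H" "(x,b)\<in>H" shows "a = b"
proof -
  have n: "\<And>x a. (x,a)\<in>H \<Longrightarrow> (-x,-a)\<in>H"
    using assms(1) unfolding hb_good_def by (metis mult_minus1 scaleR_minus1_left)
  have "(x + -x, a + -b) \<in> H" "(x + -x, b + -a) \<in> H"
    using assms n unfolding hb_good_def by blast+
  then have "a - b \<le> 0" "b - a \<le> 0" using assms(1) unfolding hb_good_def
    by (metis add.right_inverse mult_zero_right norm_zero diff_conv_add_uminus)+
  then show ?thesis by simp
qed

lemma hb_step:
  fixes H :: "('a::real_normed_vector \<times> real) set"
  assumes g: "hb_good C H" and C: "C \<ge> 0" and x0: "x0 \<notin> Domain H"
  shows "\<exists>H'. hb_good C H' \<and> H \<subseteq> H' \<and> x0 \<in> Domain H'"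
proof -
  have add: "\<And>x a y b. (x,a)\<in>H \<Longrightarrow> (y,b)\<in>H \<Longrightarrow> (x+y,a+b)\<in>H"
   and sc: "\<And>r x a. (x,a)\<in>H \<Longrightarrow> (r *\<^sub>R x, r*a)\<in>H"
   and dom: "\<And>x a. (x,a)\<in>H \<Longrightarrow> a \<le> C * norm x"
   and z: "(0,0)\<in>H" using g unfolding hb_good_def by blast+
  define L where "L = {b - C * norm (n - x0) | n b. (n,b)\<in>H}"
  have key: "b - C * norm (n - x0) \<le> C * norm (m + x0) - a" if "(n,b)\<in>H" "(m,a)\<in>H" for n b m a
  proof -
    have "a + b \<le> C * norm (m + n)" using dom[OF add[OF that(2) that(1)]] .
    also have "norm (m + n) \<le> norm (n - x0) + norm (m + x0)"
      using norm_triangle_ineq[of "n - x0" "m + x0"] by (simp add: algebra_simps)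
    then have "C * norm (m + n) \<le> C * (norm (n - x0) + norm (m + x0))"
      using C by (rule mult_left_mono)
    with \<open>a + b \<le> C * norm (m + n)\<close> show ?thesis by (simp add: distrib_left)
  qed
  define c where "c = Sup L"
  have Lne: "L \<noteq> {}" using z unfolding L_def by blast
  have Lbdd: "bdd_above L" unfolding L_def bdd_above_def using key[OF _ z] by fastforce
  have c1: "b - C * norm (n - x0) \<le> c" if "(n,b)\<in>H" for n b
    unfolding c_def by (rule cSup_upper[OF _ Lbdd]) (use that L_def in blast)
  have c2: "c \<le> C * norm (m + x0) - a" if "(m,a)\<in>H" for m a
    unfolding c_def by (rule cSup_least[OF Lne]) (use key that L_def in blast)
  define H' where "H' = {(m + t *\<^sub>R x0, a + t*c) | m a t. (m,a)\<in>H}"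
  have "hb_good C H'"
    unfolding hb_good_def
  proof (intro conjI allI impI)
    show "(0,0)\<in>H'" unfolding H'_def using z by force
    fix x a y b assume "(x,a)\<in>H'" "(y,b)\<in>H'"
    then obtain m1 a1 t1 m2 a2 t2 where "(m1,a1)\<in>H" "(m2,a2)\<in>H"
      "x = m1 + t1 *\<^sub>R x0" "a = a1 + t1*c" "y = m2 + t2 *\<^sub>R x0" "b = a2 + t2*c"
      unfolding H'_def by blast
    then show "(x+y,a+b)\<in>H'" unfolding H'_def
      by (intro CollectI exI[of _ "m1+m2"] exI[of _ "a1+a2"] exI[of _ "t1+t2"])
         (auto simp: add algebra_simps)
  next
    fix r x a assume "(x,a)\<in>H'"
    then obtain m1 a1 t1 where h1: "(m1,a1)\<in>H" and xe: "x = m1 + t1 *\<^sub>R x0" and ae: "a = a1 + t1*c"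
      unfolding H'_def by blast
    have e1: "r *\<^sub>R x = r *\<^sub>R m1 + (r*t1) *\<^sub>R x0" unfolding xe by (simp add: scaleR_add_right)
    have e2: "r*a = r*a1 + (r*t1)*c" unfolding ae by (simp add: distrib_left)
    have h2: "(r *\<^sub>R m1, r*a1) \<in> H" using sc h1 by blast
    show "(r *\<^sub>R x, r*a)\<in>H'" unfolding H'_def mem_Collect_eq e1 e2
      using h2 by blast
  next
    fix x a assume "(x,a)\<in>H'"
    then obtain m a1 t where ma: "(m,a1)\<in>H" and xa: "x = m + t *\<^sub>R x0" "a = a1 + t*c"
      unfolding H'_def by blast
    consider "t = 0" | "t > 0" | "t < 0" by linarith
    then show "a \<le> C * norm x"
    proof cases
      case 1 then show ?thesis using dom[OF ma] xa by simp
    next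
      case 2
      have h: "((1/t) *\<^sub>R m, (1/t)*a1) \<in> H" using sc[OF ma] .
      have "c \<le> C * norm ((1/t) *\<^sub>R m + x0) - (1/t)*a1" using c2[OF h] .
      hence "t * c \<le> t * (C * norm ((1/t) *\<^sub>R m + x0) - (1/t)*a1)"
        using 2 by (intro mult_left_mono) simp_all
      hence "t * c \<le> t * (C * norm ((1/t) *\<^sub>R m + x0)) - a1"
        using 2 by (simp add: right_diff_distrib)
      moreover have "t * norm ((1/t) *\<^sub>R m + x0) = norm (m + t *\<^sub>R x0)"
      proof -
        have "t *\<^sub>R ((1/t) *\<^sub>R m + x0) = m + t *\<^sub>R x0" using 2 by (simp add: scaleR_add_right)
        then show ?thesis using 2 by (metis abs_of_pos norm_scaleR)
      qed
      ultimately show ?thesis using xa by (simp add: algebra_simps)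
    next
      case 3
      define s where "s = -t"
      have s: "s > 0" using 3 s_def by simp
      have h: "((1/s) *\<^sub>R m, (1/s)*a1) \<in> H" using sc[OF ma] .
      have "(1/s)*a1 - C * norm ((1/s) *\<^sub>R m - x0) \<le> c" using c1[OF h] .
      hence "s * ((1/s)*a1 - C * norm ((1/s) *\<^sub>R m - x0)) \<le> s * c"
        using s by (intro mult_left_mono) simp_all
      hence f1: "a1 - s * (C * norm ((1/s) *\<^sub>R m - x0)) \<le> s * c"
        using s by (simp add: right_diff_distrib)
      have f2: "s * norm ((1/s) *\<^sub>R m - x0) = norm (m + t *\<^sub>R x0)"
      proof -
        have "s *\<^sub>R ((1/s) *\<^sub>R m - x0) = m + t *\<^sub>R x0" using s by (simp add: s_def scaleR_diff_right)
        then show ?thesis using s by (metis abs_of_pos norm_scaleR)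
      qed
      have f3: "s * (C * norm ((1/s) *\<^sub>R m - x0)) = C * norm (m + t *\<^sub>R x0)"
        using f2 by (metis mult.left_commute)
      have f4: "t * c = - (s * c)" by (simp add: s_def)
      show ?thesis unfolding xa using f1 f3 f4 by linarith
    qed
  qed
  moreover have "H \<subseteq> H'" unfolding H'_def by force
  moreover have "x0 \<in> Domain H'" unfolding H'_def using z
    by (intro DomainI[of _ "0 + 1*c"]) (force)
  ultimately show ?thesis by blast
qed

lemma hb_zorn:
  fixes H0 :: "('a::real_normed_vector \<times> real) set"
  assumes g: "hb_good C H0" and C: "C \<ge> 0"
  shows "\<exists>H. hb_good C H \<and> H0 \<subseteq> H \<and> Domain H = UNIV"
proof -
  define A where "A = {H. hb_good C H \<and> H0 \<subseteq> H}"
  have "\<forall>Ch\<in>chains A. \<exists>U\<in>A. \<forall>X\<in>Ch. X \<subseteq> U"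
  proof
    fix Ch assume ch: "Ch \<in> chains A"
    show "\<exists>U\<in>A. \<forall>X\<in>Ch. X \<subseteq> U"
    proof (cases "Ch = {}")
      case True then show ?thesis using g unfolding A_def by blast
    next
      case False
      have sub: "Ch \<subseteq> A" and cc: "\<And>X Y. X \<in> Ch \<Longrightarrow> Y \<in> Ch \<Longrightarrow> X \<subseteq> Y \<or> Y \<subseteq> X"
        using ch unfolding chains_def chain_subset_def by blast+
      have good: "\<And>X. X \<in> Ch \<Longrightarrow> hb_good C X" and h0: "\<And>X. X \<in> Ch \<Longrightarrow> H0 \<subseteq> X"
        using sub unfolding A_def by blast+
      obtain X0 where X0: "X0 \<in> Ch" using False by blast
      have "hb_good C (\<Union>Ch)"
        unfolding hb_good_def
      proof (intro conjI allI impI)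
        show "(0,0) \<in> \<Union>Ch" using good[OF X0] X0 unfolding hb_good_def by blast
      next
        fix x a y b assume "(x,a) \<in> \<Union>Ch" "(y,b) \<in> \<Union>Ch"
        then obtain X Y where XY: "X \<in> Ch" "Y \<in> Ch" "(x,a)\<in>X" "(y,b)\<in>Y" by blast
        from cc[OF XY(1,2)] show "(x+y,a+b) \<in> \<Union>Ch"
        proof
          assume "X \<subseteq> Y" then show ?thesis using good[OF XY(2)] XY unfolding hb_good_def by blast
        next
          assume "Y \<subseteq> X" then show ?thesis using good[OF XY(1)] XY unfolding hb_good_def by blast
        qed
      next
        fix r x a assume "(x,a) \<in> \<Union>Ch"
        then obtain X where "X \<in> Ch" "(x,a)\<in>X" by blast
        then show "(r *\<^sub>R x, r*a) \<in> \<Union>Ch" using good unfolding hb_good_def by blast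
      next
        fix x a assume "(x,a) \<in> \<Union>Ch"
        then obtain X where "X \<in> Ch" "(x,a)\<in>X" by blast
        then show "a \<le> C * norm x" using good unfolding hb_good_def by blast
      qed
      moreover have "H0 \<subseteq> \<Union>Ch" using h0 X0 by blast
      ultimately show ?thesis unfolding A_def by blast
    qed
  qed
  from Zorn_Lemma2[OF this] obtain M where M: "M \<in> A" and mx: "\<And>X. X \<in> A \<Longrightarrow> M \<subseteq> X \<Longrightarrow> X = M"
    by blast
  have "Domain M = UNIV"
  proof (rule ccontr)
    assume "Domain M \<noteq> UNIV"
    then obtain x0 where "x0 \<notin> Domain M" by blast
    from hb_step[OF _ C this] M obtain H' where "hb_good C H'" "M \<subseteq> H'" "x0 \<in> Domain H'"
      unfolding A_def by blast
    moreover then have "H' \<in> A" using M unfolding A_def by blast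
    ultimately show False using mx \<open>x0 \<notin> Domain M\<close> by blast
  qed
  then show ?thesis using M unfolding A_def by blast
qed

lemma hahn_banach:
  fixes H0 :: "('a::real_normed_vector \<times> real) set"
  assumes g: "hb_good C H0" and C: "C \<ge> 0"
  shows "\<exists>G. bounded_linear G \<and> (\<forall>x a. (x,a)\<in>H0 \<longrightarrow> G x = a) \<and> (\<forall>x. \<bar>G x\<bar> \<le> C * norm x)"
proof -
  obtain H where H: "hb_good C H" "H0 \<subseteq> H" "Domain H = UNIV" using hb_zorn[OF g C] by blast
  define G where "G x = (SOME a. (x,a)\<in>H)" for x
  have inH: "(x, G x) \<in> H" for x unfolding G_def using H(3) by (metis DomainE UNIV_I someI)
  have eq: "(x,a) \<in> H \<Longrightarrow> G x = a" for x a using hb_good_fun[OF H(1) inH] by blast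
  have add: "G (x+y) = G x + G y" for x y
    using H(1) inH eq unfolding hb_good_def by blast
  have scl: "G (r *\<^sub>R x) = r * G x" for r x
    using H(1) inH eq unfolding hb_good_def by blast
  have up: "G x \<le> C * norm x" for x using H(1) inH unfolding hb_good_def by blast
  have ab: "\<bar>G x\<bar> \<le> C * norm x" for x
  proof -
    have "G (-x) \<le> C * norm (-x)" by (rule up)
    moreover have "G (-x) = - G x" using scl[of "-1" x] by simp
    ultimately show ?thesis using up[of x] by simp
  qed
  have "bounded_linear G"
    by (rule bounded_linear_intro[where K=C]) (use add scl ab in \<open>auto simp: mult.commute\<close>)
  moreover have "\<forall>x a. (x,a)\<in>H0 \<longrightarrow> G x = a" using eq H(2) by blast
  ultimately show ?thesis using ab by blast
qed

lemma separation:
  fixes S :: "'a::real_normed_vector set"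
  assumes cl: "closed S" and z: "0 \<in> S" and ad: "\<And>x y. x\<in>S \<Longrightarrow> y\<in>S \<Longrightarrow> x+y \<in> S"
    and sm: "\<And>r x. x\<in>S \<Longrightarrow> r *\<^sub>R x \<in> S" and p: "p \<notin> S"
  shows "\<exists>G::'a \<Rightarrow> real. bounded_linear G \<and> (\<forall>x\<in>S. G x = 0) \<and> G p = 1"
proof -
  define d where "d = infdist p S"
  have d: "d > 0" unfolding d_def using infdist_pos_not_in_closed[OF cl _ p] z by blast
  define H0 where "H0 = {(s + t *\<^sub>R p, t) | s t. s \<in> S}"
  have "hb_good (1/d) H0" unfolding hb_good_def
  proof (intro conjI allI impI)
    show "(0,0) \<in> H0" unfolding H0_def using z by force
  next
    fix x a y b assume "(x,a)\<in>H0" "(y,b)\<in>H0"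
    then obtain s1 t1 s2 t2 where "s1\<in>S" "s2\<in>S" "x = s1 + t1 *\<^sub>R p" "a = t1" "y = s2 + t2 *\<^sub>R p" "b = t2"
      unfolding H0_def by blast
    moreover have "x + y = (s1+s2) + (t1+t2) *\<^sub>R p" using calculation by (simp add: algebra_simps)
    ultimately show "(x+y,a+b)\<in>H0" unfolding H0_def using ad by blast
  next
    fix r x a assume "(x,a)\<in>H0"
    then obtain s1 t1 where "s1\<in>S" "x = s1 + t1 *\<^sub>R p" "a = t1" unfolding H0_def by blast
    moreover have "r *\<^sub>R x = (r *\<^sub>R s1) + (r*t1) *\<^sub>R p" using calculation by (simp add: scaleR_add_right)
    ultimately show "(r *\<^sub>R x, r*a)\<in>H0" unfolding H0_def using sm by blast
  next
    fix x a assume "(x,a)\<in>H0"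
    then obtain s t where s: "s\<in>S" and xa: "x = s + t *\<^sub>R p" "a = t" unfolding H0_def by blast
    show "a \<le> 1/d * norm x"
    proof (cases "t = 0")
      case True then show ?thesis using xa d by simp
    next
      case False
      have "(- (1/t)) *\<^sub>R s \<in> S" using sm s by blast
      then have "d \<le> dist p ((- (1/t)) *\<^sub>R s)" unfolding d_def by (rule infdist_le)
      also have "dist p ((- (1/t)) *\<^sub>R s) = norm (p + (1/t) *\<^sub>R s)" by (simp add: dist_norm)
      finally have "\<bar>t\<bar> * d \<le> \<bar>t\<bar> * norm (p + (1/t) *\<^sub>R s)" by (simp add: mult_left_mono)
      also have "\<bar>t\<bar> * norm (p + (1/t) *\<^sub>R s) = norm (t *\<^sub>R (p + (1/t) *\<^sub>R s))" by simp
      also have "t *\<^sub>R (p + (1/t) *\<^sub>R s) = x" using False xa by (simp add: scaleR_add_right add.commute)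
      finally have "\<bar>t\<bar> * d \<le> norm x" .
      then have "\<bar>t\<bar> \<le> norm x / d" using d by (simp add: field_simps)
      then show ?thesis using xa by simp
    qed
  qed
  from hahn_banach[OF this] d obtain G where G: "bounded_linear G" "\<And>x a. (x,a)\<in>H0 \<Longrightarrow> G x = a"
    by auto
  have "G s = 0" if "s \<in> S" for s using G(2)[of s 0] that unfolding H0_def by force
  moreover have "G p = 1" using G(2)[of p 1] z unfolding H0_def by force
  ultimately show ?thesis using G(1) by (intro exI[of _ G]) auto
qed

lemma norming_real:
  fixes v :: "'a::real_normed_vector"
  shows "\<exists>G. bounded_linear G \<and> G v = norm v \<and> (\<forall>x. \<bar>G x\<bar> \<le> norm x)"
proof -
  define H0 where "H0 = {(t *\<^sub>R v, t * norm v) | t. True}"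
  have "hb_good 1 H0" unfolding hb_good_def
  proof (intro conjI allI impI)
    show "(0,0) \<in> H0" unfolding H0_def by (auto intro!: exI[of _ 0])
  next
    fix x a y b assume "(x,a)\<in>H0" "(y,b)\<in>H0"
    then obtain t1 t2 where "x = t1 *\<^sub>R v" "a = t1 * norm v" "y = t2 *\<^sub>R v" "b = t2 * norm v"
      unfolding H0_def by blast
    then show "(x+y,a+b)\<in>H0" unfolding H0_def
      by (auto intro!: exI[of _ "t1+t2"] simp: algebra_simps)
  next
    fix r x a assume "(x,a)\<in>H0"
    then obtain t1 where "x = t1 *\<^sub>R v" "a = t1 * norm v" unfolding H0_def by blast
    then show "(r *\<^sub>R x, r*a)\<in>H0" unfolding H0_def
      by (auto intro!: exI[of _ "r*t1"] simp: algebra_simps)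
  next
    fix x a assume "(x,a)\<in>H0"
    then obtain t1 where "x = t1 *\<^sub>R v" "a = t1 * norm v" unfolding H0_def by blast
    then show "a \<le> 1 * norm x" by (simp add: mult_right_mono)
  qed
  from hahn_banach[OF this] obtain G where G: "bounded_linear G" "\<And>x a. (x,a)\<in>H0 \<Longrightarrow> G x = a"
    "\<And>x. \<bar>G x\<bar> \<le> 1 * norm x" by auto
  have "G v = norm v" using G(2)[of v "norm v"] unfolding H0_def by (force intro: exI[of _ 1])
  then show ?thesis using G by auto
qed


lemma vsC: "vector_space ((*) :: complex \<Rightarrow> complex \<Rightarrow> complex)"
  by unfold_locales (simp_all add: algebra_simps)

locale cbx =
  fixes sc :: "complex \<Rightarrow> 'x::banach \<Rightarrow> 'x"
  assumes cb: "cbanach sc"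
begin

lemma vs: "vector_space sc" using cb unfolding cbanach_def by blast
lemma sc_real: "sc (complex_of_real r) x = r *\<^sub>R x" using cb unfolding cbanach_def by blast
lemma sc_norm: "norm (sc c x) = cmod c * norm x" using cb unfolding cbanach_def by blast
lemma sc_add: "sc c (x + y) = sc c x + sc c y" using vs unfolding vector_space_def by blast
lemma sc_ladd: "sc (a + b) x = sc a x + sc b x" using vs unfolding vector_space_def by blast
lemma sc_assoc: "sc a (sc b x) = sc (a * b) x" using vs unfolding vector_space_def by blast
lemma sc_one: "sc 1 x = x" using vs unfolding vector_space_def by blast
lemma sc_zero: "sc c 0 = 0" using sc_add[of c 0 0] by simp
lemma sc_neg1: "sc (-1) x = - x" using sc_real[of "-1" x] by simp
lemma sc_diff: "sc c (x - y) = sc c x - sc c y"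
proof -
  have "sc c x = sc c (x - y) + sc c y" using sc_add[of c "x - y" y] by simp
  then show ?thesis by simp
qed
lemma sc_scaleR: "sc c (r *\<^sub>R y) = r *\<^sub>R sc c y"
proof -
  have "sc c (r *\<^sub>R y) = sc c (sc (complex_of_real r) y)" by (simp only: sc_real)
  also have "\<dots> = sc (complex_of_real r) (sc c y)" by (simp only: sc_assoc mult.commute)
  finally show ?thesis by (simp only: sc_real)
qed

lemma sc_minus: "sc c (- x) = - sc c x" using sc_diff[of c 0 x] sc_zero by simp

lemma cdualD:
  assumes "\<phi> \<in> cdual sc"
  shows "\<phi> (x + y) = \<phi> x + \<phi> y" "\<phi> (sc c x) = c * \<phi> x"
  using assms unfolding cdual_def Vector_Spaces.linear_iff by auto

lemma cdual_bound: "\<phi> \<in> cdual sc \<Longrightarrow> \<exists>K. \<forall>x. cmod (\<phi> x) \<le> K * norm x"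
  unfolding cdual_def by blast

lemma cdualI:
  assumes "\<And>x y. \<phi> (x + y) = \<phi> x + \<phi> y" "\<And>c x. \<phi> (sc c x) = c * \<phi> x"
    "\<And>x. cmod (\<phi> x) \<le> K * norm x"
  shows "\<phi> \<in> cdual sc"
  unfolding cdual_def Vector_Spaces.linear_iff using assms vs vsC by blast

lemma cdual_bl:
  assumes "\<phi> \<in> cdual sc" shows "bounded_linear \<phi>"
proof -
  obtain K where K: "\<And>x. cmod (\<phi> x) \<le> K * norm x" using cdual_bound[OF assms] by blast
  show ?thesis
  proof (rule bounded_linear_intro[where K=K])
    show "\<phi> (x + y) = \<phi> x + \<phi> y" for x y using cdualD[OF assms] by blast
    show "\<phi> (r *\<^sub>R x) = r *\<^sub>R \<phi> x" for r x
      using cdualD(2)[OF assms, of "complex_of_real r" x] by (simp add: sc_real scaleR_conv_of_real)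
    show "norm (\<phi> x) \<le> norm x * K" for x using K[of x] by (simp add: mult.commute)
  qed
qed

lemma cdual_zero: "\<phi> \<in> cdual sc \<Longrightarrow> \<phi> 0 = 0"
  using cdualD(1)[of \<phi> 0 0] by simp

lemma cdual_diff: "\<phi> \<in> cdual sc \<Longrightarrow> \<phi> (x - y) = \<phi> x - \<phi> y"
  using cdualD(1)[of \<phi> "x - y" y] by simp

lemma cdual_cont: "\<phi> \<in> cdual sc \<Longrightarrow> continuous_on UNIV \<phi>"
  using cdual_bl linear_continuous_on by blast

lemma cdual_0: "(\<lambda>_. 0) \<in> cdual sc"
  by (rule cdualI[where K=0]) auto

lemma cdual_add: "\<phi> \<in> cdual sc \<Longrightarrow> \<psi> \<in> cdual sc \<Longrightarrow> (\<lambda>x. \<phi> x + \<psi> x) \<in> cdual sc"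
proof -
  assume a: "\<phi> \<in> cdual sc" "\<psi> \<in> cdual sc"
  obtain K1 K2 where K: "\<And>x. cmod (\<phi> x) \<le> K1 * norm x" "\<And>x. cmod (\<psi> x) \<le> K2 * norm x"
    using cdual_bound a by metis
  show ?thesis
  proof (rule cdualI[where K="K1+K2"])
    show "\<phi> (x + y) + \<psi> (x + y) = \<phi> x + \<psi> x + (\<phi> y + \<psi> y)" for x y
      using cdualD(1)[OF a(1)] cdualD(1)[OF a(2)] by simp
    show "\<phi> (sc c x) + \<psi> (sc c x) = c * (\<phi> x + \<psi> x)" for c x
      using cdualD(2)[OF a(1)] cdualD(2)[OF a(2)] by (simp add: algebra_simps)
    show "cmod (\<phi> x + \<psi> x) \<le> (K1 + K2) * norm x" for x
      using norm_triangle_ineq[of "\<phi> x" "\<psi> x"] K[of x] by (simp add: distrib_right)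
  qed
qed

lemma cdual_smul: "\<phi> \<in> cdual sc \<Longrightarrow> (\<lambda>x. c * \<phi> x) \<in> cdual sc"
proof -
  assume a: "\<phi> \<in> cdual sc"
  obtain K where K: "\<And>x. cmod (\<phi> x) \<le> K * norm x" using cdual_bound a by metis
  show ?thesis
  proof (rule cdualI[where K="cmod c * K"])
    show "c * \<phi> (x + y) = c * \<phi> x + c * \<phi> y" for x y using cdualD(1)[OF a] by (simp add: algebra_simps)
    show "c * \<phi> (sc d x) = d * (c * \<phi> x)" for d x using cdualD(2)[OF a] by (simp add: algebra_simps)
    show "cmod (c * \<phi> x) \<le> cmod c * K * norm x" for x
      using K[of x] by (simp add: norm_mult mult_left_mono mult.assoc)
  qed
qed

lemma dnorm_bdd: "\<phi> \<in> cdual sc \<Longrightarrow> bdd_above {cmod (\<phi> x) | x. norm x \<le> 1}"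
proof -
  assume a: "\<phi> \<in> cdual sc"
  obtain K where K: "\<And>x. cmod (\<phi> x) \<le> K * norm x" using cdual_bound a by metis
  have "cmod (\<phi> x) \<le> \<bar>K\<bar>" if "norm x \<le> 1" for x
  proof -
    have "K * norm x \<le> \<bar>K\<bar> * norm x" by (simp add: mult_right_mono)
    also have "\<dots> \<le> \<bar>K\<bar>" using that by (simp add: mult_left_le)
    finally show ?thesis using K[of x] by linarith
  qed
  then show ?thesis unfolding bdd_above_def by blast
qed

lemma dnorm_ge: "\<phi> \<in> cdual sc \<Longrightarrow> norm x \<le> 1 \<Longrightarrow> cmod (\<phi> x) \<le> dnorm \<phi>"
  unfolding dnorm_def by (rule cSup_upper) (auto intro: dnorm_bdd)

lemma dnorm_nonneg: assumes a: "\<phi> \<in> cdual sc" shows "0 \<le> dnorm \<phi>"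
  using dnorm_ge[OF a, of 0] cdual_zero[OF a] by simp

lemma dnorm_le: "(\<And>x. norm x \<le> 1 \<Longrightarrow> cmod (\<phi> x) \<le> M) \<Longrightarrow> dnorm \<phi> \<le> M"
  unfolding dnorm_def by (rule cSup_least) (auto intro: exI[of _ 0])

lemma dnorm_bound:
  assumes a: "\<phi> \<in> cdual sc" shows "cmod (\<phi> x) \<le> dnorm \<phi> * norm x"
proof (cases "x = 0")
  case True then show ?thesis using cdual_zero[OF a] by simp
next
  case False
  define u where "u = (1 / norm x) *\<^sub>R x"
  have nu: "norm u \<le> 1" using False unfolding u_def by simp
  have "\<phi> u = \<phi> (sc (complex_of_real (1 / norm x)) x)" unfolding u_def sc_real ..
  also have "\<dots> = complex_of_real (1 / norm x) * \<phi> x" using cdualD(2)[OF a] .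
  finally have "\<phi> u = complex_of_real (1 / norm x) * \<phi> x" .
  then have "cmod (\<phi> u) = cmod (\<phi> x) / norm x" by (simp add: norm_divide)
  with dnorm_ge[OF a nu] have "cmod (\<phi> x) / norm x \<le> dnorm \<phi>" by simp
  then show ?thesis using False by (simp add: field_simps)
qed

definition cpx :: "('x \<Rightarrow> real) \<Rightarrow> 'x \<Rightarrow> complex" where
  "cpx G v = complex_of_real (G v) - \<i> * complex_of_real (G (sc \<i> v))"

lemma complexify:
  assumes G: "bounded_linear G" and K: "\<And>x. \<bar>G x\<bar> \<le> K * norm x"
  shows "cpx G \<in> cdual sc" "\<And>v. Re (cpx G v) = G v" "\<And>v. cmod (cpx G v) \<le> K * norm v"
proof -
  interpret G: bounded_linear G by fact
  show re: "Re (cpx G v) = G v" for v unfolding cpx_def by simp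
  have add: "cpx G (x + y) = cpx G x + cpx G y" for x y
    unfolding cpx_def by (simp add: sc_add G.add algebra_simps)
  have decomp: "sc c v = Re c *\<^sub>R v + Im c *\<^sub>R sc \<i> v" for c v
  proof -
    have "c = complex_of_real (Re c) + complex_of_real (Im c) * \<i>" by (simp add: complex_eq_iff)
    then have "sc c v = sc (complex_of_real (Re c)) v + sc (complex_of_real (Im c)) (sc \<i> v)"
      by (metis sc_ladd sc_assoc)
    then show ?thesis by (simp add: sc_real)
  qed
  have ii: "sc \<i> (sc \<i> v) = - v" for v using sc_assoc[of \<i> \<i> v] sc_neg1 by simp
  have scl: "cpx G (sc c x) = c * cpx G x" for c x
  proof -
    have e1: "G (sc c x) = Re c * G x + Im c * G (sc \<i> x)"
      by (simp only: decomp[of c x] G.add G.scaleR) simp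
    have "sc \<i> (sc c x) = Re c *\<^sub>R sc \<i> x - Im c *\<^sub>R x"
      by (simp only: decomp[of c x] sc_add sc_scaleR ii) simp
    then have e2: "G (sc \<i> (sc c x)) = Re c * G (sc \<i> x) - Im c * G x"
      by (simp add: G.diff G.scaleR)
    show ?thesis unfolding cpx_def e1 e2 by (simp add: complex_eq_iff algebra_simps)
  qed
  have bd: "cmod (cpx G v) \<le> K * norm v" for v
  proof (cases "cpx G v = 0")
    case True
    have "0 \<le> \<bar>G v\<bar>" by simp
    moreover have "\<bar>G v\<bar> \<le> K * norm v" using K[of v] .
    ultimately show ?thesis using True by simp
  next
    case False
    define w where "w = cpx G v"
    define u where "u = cnj w / complex_of_real (cmod w)"
    have wn: "cmod w > 0" using False w_def by simp
    have cu: "cmod u = 1" unfolding u_def using wn by (simp add: norm_divide)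
    have "cpx G (sc u v) = u * w" using scl w_def by simp
    also have "u * w = complex_of_real (cmod w)" unfolding u_def using wn
      by (simp add: field_simps complex_norm_square[symmetric] power2_eq_square)
    finally have e: "G (sc u v) = cmod w" using re[of "sc u v"] by simp
    have "cmod w \<le> K * norm (sc u v)" using K[of "sc u v"] e by simp
    then show ?thesis using cu unfolding w_def by (simp add: sc_norm)
  qed
  then show "cmod (cpx G v) \<le> K * norm v" for v by blast
  have "K * norm x \<le> \<bar>K\<bar> * norm x" for x by (simp add: mult_right_mono)
  show "cpx G \<in> cdual sc" by (rule cdualI[OF add scl bd])
qed

end

lemma closure_add_closed:
  fixes S :: "'a::real_normed_vector set"
  assumes "\<And>x y. x\<in>S \<Longrightarrow> y\<in>S \<Longrightarrow> x+y \<in> S" "x \<in> closure S" "y \<in> closure S"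
  shows "x + y \<in> closure S"
proof -
  from assms(2) obtain a where a: "\<forall>n. a n \<in> S" "a \<longlonglongrightarrow> x" unfolding closure_sequential by blast
  from assms(3) obtain b where b: "\<forall>n. b n \<in> S" "b \<longlonglongrightarrow> y" unfolding closure_sequential by blast
  have "(\<lambda>n. a n + b n) \<longlonglongrightarrow> x + y" using a b by (intro tendsto_add)
  moreover have "\<forall>n. a n + b n \<in> S" using a b assms(1) by blast
  ultimately show ?thesis unfolding closure_sequential by (intro exI[of _ "\<lambda>n. a n + b n"]) simp
qed

lemma closure_scaleR_closed:
  fixes S :: "'a::real_normed_vector set"
  assumes "\<And>x. x\<in>S \<Longrightarrow> r *\<^sub>R x \<in> S" "x \<in> closure S"
  shows "r *\<^sub>R x \<in> closure S"
proof -
  from assms(2) obtain a where a: "\<forall>n. a n \<in> S" "a \<longlonglongrightarrow> x" unfolding closure_sequential by blast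
  have "(\<lambda>n. r *\<^sub>R a n) \<longlonglongrightarrow> r *\<^sub>R x" using a by (intro tendsto_scaleR tendsto_const)
  moreover have "\<forall>n. r *\<^sub>R a n \<in> S" using a assms(1) by blast
  ultimately show ?thesis unfolding closure_sequential by (intro exI[of _ "\<lambda>n. r *\<^sub>R a n"]) simp
qed

lemma bl_real_bound:
  fixes G :: "'a::real_normed_vector \<Rightarrow> real"
  assumes "bounded_linear G" shows "\<exists>K. \<forall>x. \<bar>G x\<bar> \<le> K * norm x"
proof -
  obtain K where K: "\<And>x. norm (G x) \<le> norm x * K" using bounded_linear.bounded[OF assms] by blast
  have "\<bar>G x\<bar> \<le> K * norm x" for x using K[of x] by (simp add: mult.commute)
  then show ?thesis by blast
qed

definition opfun :: "('x \<times> 'x) set \<Rightarrow> 'x \<Rightarrow> 'x" where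
  "opfun R x = (SOME y. (x,y) \<in> R)"

context cbx
begin

lemma cop_add: "closed_op sc R \<Longrightarrow> (x,y)\<in>R \<Longrightarrow> (u,v)\<in>R \<Longrightarrow> (x+u, y+v) \<in> R"
  unfolding closed_op_def lin_rel_def by blast
lemma cop_sc: "closed_op sc R \<Longrightarrow> (x,y)\<in>R \<Longrightarrow> (sc c x, sc c y) \<in> R"
  unfolding closed_op_def lin_rel_def by blast
lemma cop_zero: "closed_op sc R \<Longrightarrow> (0,0) \<in> R"
  unfolding closed_op_def lin_rel_def by blast
lemma cop_closed: "closed_op sc R \<Longrightarrow> closed R"
  unfolding closed_op_def by blast
lemma cop_neg: "closed_op sc R \<Longrightarrow> (x,y)\<in>R \<Longrightarrow> (-x, -y) \<in> R"
  using cop_sc[of R x y "-1"] by (simp add: sc_neg1)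
lemma cop_diff: "closed_op sc R \<Longrightarrow> (x,y)\<in>R \<Longrightarrow> (u,v)\<in>R \<Longrightarrow> (x-u, y-v) \<in> R"
  using cop_add[of R x y "-u" "-v"] cop_neg[of R u v] by simp
lemma cop_sv: "closed_op sc R \<Longrightarrow> (x,y)\<in>R \<Longrightarrow> (x,z)\<in>R \<Longrightarrow> y = z"
proof -
  assume a: "closed_op sc R" "(x,y)\<in>R" "(x,z)\<in>R"
  have "(0, y - z) \<in> R" using cop_diff[OF a] by simp
  then have "y - z = 0" using a(1) unfolding closed_op_def by blast
  then show ?thesis by simp
qed

lemma bop_cop: "bounded_op sc R \<Longrightarrow> closed_op sc R" unfolding bounded_op_def by blast
lemma bop_in: assumes a: "bounded_op sc R" shows "(x, opfun R x) \<in> R"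
proof -
  have "x \<in> Domain R" using a unfolding bounded_op_def by blast
  then obtain y where "(x,y) \<in> R" by blast
  then show ?thesis unfolding opfun_def by (rule someI)
qed
lemma bop_eq: assumes a: "bounded_op sc R" and b: "(x,y) \<in> R" shows "opfun R x = y"
  by (rule cop_sv[OF bop_cop[OF a] bop_in[OF a] b])
lemma bop_add: assumes a: "bounded_op sc R" shows "opfun R (x+y) = opfun R x + opfun R y"
  by (rule bop_eq[OF a cop_add[OF bop_cop[OF a] bop_in[OF a] bop_in[OF a]]])
lemma bop_sc: assumes a: "bounded_op sc R" shows "opfun R (sc c x) = sc c (opfun R x)"
  by (rule bop_eq[OF a cop_sc[OF bop_cop[OF a] bop_in[OF a]]])
lemma bop_bound: "bounded_op sc R \<Longrightarrow> \<exists>K\<ge>0. \<forall>x. norm (opfun R x) \<le> K * norm x"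
proof -
  assume a: "bounded_op sc R"
  then obtain K where K: "\<And>x y. (x,y)\<in>R \<Longrightarrow> norm y \<le> K * norm x" unfolding bounded_op_def by blast
  have "norm (opfun R x) \<le> max K 0 * norm x" for x
  proof -
    have "K * norm x \<le> max K 0 * norm x" by (rule mult_right_mono) auto
    then show ?thesis using K[OF bop_in[OF a, of x]] by linarith
  qed
  then show ?thesis by (intro exI[of _ "max K 0"]) auto
qed
lemma bop_bl: "bounded_op sc R \<Longrightarrow> bounded_linear (opfun R)"
proof -
  assume a: "bounded_op sc R"
  obtain K where K: "\<And>x. norm (opfun R x) \<le> K * norm x" using bop_bound[OF a] by blast
  show ?thesis
  proof (rule bounded_linear_intro[where K=K])
    show "opfun R (x + y) = opfun R x + opfun R y" for x y using bop_add[OF a] .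
    show "opfun R (r *\<^sub>R x) = r *\<^sub>R opfun R x" for r x using bop_sc[OF a] by (metis sc_real)
    show "norm (opfun R x) \<le> norm x * K" for x using K[of x] by (simp add: mult.commute)
  qed
qed
lemma bop_comp_dual: "bounded_op sc R \<Longrightarrow> \<phi> \<in> cdual sc \<Longrightarrow> (\<lambda>x. \<phi> (opfun R x)) \<in> cdual sc"
proof -
  assume a: "bounded_op sc R" "\<phi> \<in> cdual sc"
  obtain K where K: "K \<ge> 0" "\<And>x. norm (opfun R x) \<le> K * norm x" using bop_bound[OF a(1)] by blast
  show ?thesis
  proof (rule cdualI[where K="dnorm \<phi> * K"])
    show "\<phi> (opfun R (x + y)) = \<phi> (opfun R x) + \<phi> (opfun R y)" for x y
      using bop_add[OF a(1)] cdualD(1)[OF a(2)] by simp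
    show "\<phi> (opfun R (sc c x)) = c * \<phi> (opfun R x)" for c x
      using bop_sc[OF a(1)] cdualD(2)[OF a(2)] by simp
    show "cmod (\<phi> (opfun R x)) \<le> dnorm \<phi> * K * norm x" for x
    proof -
      have "cmod (\<phi> (opfun R x)) \<le> dnorm \<phi> * norm (opfun R x)" by (rule dnorm_bound[OF a(2)])
      also have "\<dots> \<le> dnorm \<phi> * (K * norm x)" using K(2)[of x] dnorm_nonneg[OF a(2)] by (rule mult_left_mono)
      finally show ?thesis by (simp add: mult.assoc)
    qed
  qed
qed

lemma module_sc: "module sc" using vs module_iff_vector_space by blast

end


locale opctx = cbx sc for sc :: "complex \<Rightarrow> 'x::banach \<Rightarrow> 'x" +
  fixes smF :: "complex \<Rightarrow> 'f::ring_1 \<Rightarrow> 'f" and \<Phi> :: "'f \<Rightarrow> ('x \<times> 'x) set" and f :: 'f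
  assumes pc: "proto_calculus sc smF \<Phi>" and dc: "dual_calculus sc smF \<Phi>" and fd: "f \<in> dual_dom sc \<Phi>"
begin

abbreviation "B \<equiv> bdd_set sc \<Phi>"
abbreviation "T \<equiv> \<Phi> f"
abbreviation "D \<equiv> Dset sc \<Phi> f"
abbreviation "TD \<equiv> T \<inter> (D \<times> UNIV)"
definition "Gen = {y. \<exists>x e. e \<in> B \<and> f * e \<in> B \<and> (x, y) \<in> \<Phi> e}"

lemma D_def': "D = module.span sc Gen" unfolding Dset_def cspan_def Gen_def by simp

lemma cop_Phi: "closed_op sc (\<Phi> g)" using pc by (simp add: proto_calculus_def)
lemma cop_T: "closed_op sc T" by (rule cop_Phi)
lemma one_B: "1 \<in> B" using dc by (simp add: dual_calculus_def Let_def)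
lemma B_bop: "e \<in> B \<Longrightarrow> bounded_op sc (\<Phi> e)" unfolding bdd_set_def by blast

lemma pc_mult: "\<Phi> e O \<Phi> g \<subseteq> \<Phi> (g * e)"
  using pc by (simp add: proto_calculus_def op_mult_def)
lemma pc_dom: "Domain (\<Phi> e O \<Phi> g) = Domain (\<Phi> e) \<inter> Domain (\<Phi> (g * e))"
  using pc by (simp add: proto_calculus_def op_mult_def)
lemma bop_dom: "bounded_op sc R \<Longrightarrow> Domain R = UNIV" unfolding bounded_op_def by (elim conjE)

lemma E_comp:
  assumes e: "e \<in> B" "f * e \<in> B"
  shows "(opfun (\<Phi> e) x, opfun (\<Phi> (f * e)) x) \<in> T"
proof -
  have "x \<in> Domain (\<Phi> e O \<Phi> f)" unfolding pc_dom
    using bop_dom[OF B_bop[OF e(1)]] bop_dom[OF B_bop[OF e(2)]] by simp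
  then obtain w where "(x, w) \<in> \<Phi> e O \<Phi> f" by (rule DomainE)
  then obtain u where uw: "(x,u) \<in> \<Phi> e" "(u,w) \<in> T" by (rule relcompE) simp
  have "(x,w) \<in> \<Phi> (f*e)" using pc_mult uw by (rule subsetD[OF _ relcompI])
  then have "opfun (\<Phi> (f * e)) x = w" by (rule bop_eq[OF B_bop[OF e(2)]])
  moreover have "opfun (\<Phi> e) x = u" by (rule bop_eq[OF B_bop[OF e(1)] uw(1)])
  ultimately show ?thesis using uw(2) by simp
qed

lemma Gen_opfun: assumes "e \<in> B" "f * e \<in> B" shows "opfun (\<Phi> e) x \<in> Gen"
  unfolding Gen_def using assms bop_in[OF B_bop[OF assms(1)], of x] by blast

lemma Gen_dom: "Gen \<subseteq> Domain T"
proof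
  fix y assume "y \<in> Gen"
  then obtain x e where e: "e \<in> B" "f * e \<in> B" "(x,y) \<in> \<Phi> e" unfolding Gen_def by blast
  then have "y = opfun (\<Phi> e) x" using bop_eq[OF B_bop[OF e(1)]] by simp
  then show "y \<in> Domain T" using E_comp[OF e(1,2), of x] by blast
qed

lemma dom_subspace: "module.subspace sc (Domain T)"
proof (rule module.subspaceI[OF module_sc])
  show "0 \<in> Domain T" using cop_zero[OF cop_T] by (rule DomainI)
  show "x + y \<in> Domain T" if "x \<in> Domain T" "y \<in> Domain T" for x y
    using that cop_add[OF cop_T] by (meson Domain.simps)
  show "sc c x \<in> Domain T" if "x \<in> Domain T" for c x
    using that cop_sc[OF cop_T] by (meson Domain.simps)
qed

lemma D_dom: "D \<subseteq> Domain T"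
  unfolding D_def' by (rule module.span_minimal[OF module_sc Gen_dom dom_subspace])

lemma D_add: "x \<in> D \<Longrightarrow> y \<in> D \<Longrightarrow> x + y \<in> D"
  unfolding D_def' by (rule module.span_add[OF module_sc])
lemma D_sc: "x \<in> D \<Longrightarrow> sc c x \<in> D"
  unfolding D_def' by (rule module.span_scale[OF module_sc])
lemma D_zero: "0 \<in> D"
  unfolding D_def' by (rule module.span_zero[OF module_sc])
lemma Gen_D: "Gen \<subseteq> D"
  unfolding D_def' by (rule module.span_superset[OF module_sc])
lemma D_scaleR: "x \<in> D \<Longrightarrow> r *\<^sub>R x \<in> D" using D_sc[of x "complex_of_real r"] by (simp add: sc_real)

lemma D_induct:
  assumes "x \<in> D" "P 0" "\<And>x y. P x \<Longrightarrow> P y \<Longrightarrow> P (x + y)" "\<And>c x. P x \<Longrightarrow> P (sc c x)"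
    "\<And>x. x \<in> Gen \<Longrightarrow> P x"
  shows "P x"
proof -
  have "module.subspace sc {x. P x}"
    by (rule module.subspaceI[OF module_sc]) (use assms(2-4) in auto)
  moreover have "Gen \<subseteq> {x. P x}" using assms(5) by blast
  ultimately have "D \<subseteq> {x. P x}" unfolding D_def' by (rule module.span_minimal[OF module_sc, rotated])
  then show ?thesis using assms(1) by blast
qed

lemma D_dense: "closure D = UNIV"
proof (rule ccontr)
  assume "closure D \<noteq> UNIV"
  then obtain p where p: "p \<notin> closure D" by blast
  have "\<exists>G::'x \<Rightarrow> real. bounded_linear G \<and> (\<forall>x\<in>closure D. G x = 0) \<and> G p = 1"
  proof (rule separation[OF closed_closure _ _ _ p])
    show "0 \<in> closure D" using D_zero closure_subset by blast
    show "x + y \<in> closure D" if "x \<in> closure D" "y \<in> closure D" for x y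
      using closure_add_closed[OF D_add that] .
    show "r *\<^sub>R x \<in> closure D" if "x \<in> closure D" for r x
      using closure_scaleR_closed[OF D_scaleR that] .
  qed
  then obtain G :: "'x \<Rightarrow> real" where G: "bounded_linear G" "\<And>x. x \<in> closure D \<Longrightarrow> G x = 0" "G p = 1" by blast
  obtain K where K: "\<And>x. \<bar>G x\<bar> \<le> K * norm x" using bl_real_bound[OF G(1)] by blast
  note cx = complexify[OF G(1) K]
  have van: "cpx G y = 0" if "y \<in> D" for y
  proof -
    have "G y = 0" "G (sc \<i> y) = 0" using G(2) D_sc that closure_subset by blast+
    then show ?thesis unfolding cpx_def by simp
  qed
  have "(cpx G, (\<lambda>_. 0)) \<in> adj sc (\<Phi> e)" if "e \<in> B" "f * e \<in> B" for e
    unfolding adj_def using cx(1) cdual_0 van Gen_D that unfolding Gen_def by blast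
  then have "cpx G = (\<lambda>_. 0)" using fd one_B cx(1) unfolding dual_dom_def by simp
  then have "Re (cpx G p) = 0" by simp
  then show False using cx(2)[of p] G(3) by simp
qed

lemma adj_sub_dual: "adj sc T \<subseteq> dual_op sc \<Phi> f"
proof safe
  fix x' y' assume a: "(x', y') \<in> adj sc T"
  then have xy: "x' \<in> cdual sc" "y' \<in> cdual sc" "\<And>u v. (u,v) \<in> T \<Longrightarrow> x' v = y' u"
    unfolding adj_def by blast+
  have "\<exists>z. (x', z) \<in> adj sc (\<Phi> (f * e)) \<and> (y', z) \<in> adj sc (\<Phi> e)" if e: "e \<in> B" "f * e \<in> B" for e
  proof (intro exI conjI)
    let ?z = "\<lambda>x. y' (opfun (\<Phi> e) x)"
    have zc: "?z \<in> cdual sc" using bop_comp_dual[OF B_bop[OF e(1)] xy(2)] .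
    show "(y', ?z) \<in> adj sc (\<Phi> e)" unfolding adj_def using xy(2) zc bop_eq[OF B_bop[OF e(1)]] by auto
    show "(x', ?z) \<in> adj sc (\<Phi> (f * e))" unfolding adj_def
    proof (safe intro!: xy(1) zc)
      fix x w assume "(x, w) \<in> \<Phi> (f * e)"
      then have "w = opfun (\<Phi> (f*e)) x" using bop_eq[OF B_bop[OF e(2)]] by simp
      then show "x' w = y' (opfun (\<Phi> e) x)" using xy(3)[OF E_comp[OF e]] by simp
    qed
  qed
  then show "(x', y') \<in> dual_op sc \<Phi> f" unfolding dual_op_def using xy(1,2) by blast
qed

lemma dual_eq_adjTD: "dual_op sc \<Phi> f = adj sc TD"
proof safe
  fix x' y' assume a: "(x', y') \<in> dual_op sc \<Phi> f"
  then have xy: "x' \<in> cdual sc" "y' \<in> cdual sc"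
    and h: "\<And>e. e \<in> B \<Longrightarrow> f * e \<in> B \<Longrightarrow> \<exists>z. (x', z) \<in> adj sc (\<Phi> (f * e)) \<and> (y', z) \<in> adj sc (\<Phi> e)"
    unfolding dual_op_def by blast+
  define P where "P u \<longleftrightarrow> u \<in> Domain T \<and> (\<forall>v. (u,v) \<in> T \<longrightarrow> x' v = y' u)" for u
  have PD: "P u" if "u \<in> D" for u
    using that
  proof (rule D_induct)
    show "P 0" unfolding P_def using cop_zero[OF cop_T] cop_T cdual_zero[OF xy(1)] cdual_zero[OF xy(2)]
      unfolding closed_op_def by auto
  next
    fix u1 u2 assume p: "P u1" "P u2"
    then obtain v1 v2 where v: "(u1,v1)\<in>T" "(u2,v2)\<in>T" unfolding P_def by blast
    have s: "(u1+u2, v1+v2) \<in> T" using cop_add[OF cop_T v] .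
    show "P (u1 + u2)" unfolding P_def
    proof (intro conjI allI impI)
      show "u1 + u2 \<in> Domain T" using s by blast
      fix v assume "(u1+u2, v) \<in> T"
      then have "v = v1 + v2" using cop_sv[OF cop_T _ s] by blast
      then show "x' v = y' (u1 + u2)" using p v cdualD(1)[OF xy(1)] cdualD(1)[OF xy(2)] unfolding P_def by simp
    qed
  next
    fix c u1 assume p: "P u1"
    then obtain v1 where v: "(u1,v1)\<in>T" unfolding P_def by blast
    have s: "(sc c u1, sc c v1) \<in> T" using cop_sc[OF cop_T v] .
    show "P (sc c u1)" unfolding P_def
    proof (intro conjI allI impI)
      show "sc c u1 \<in> Domain T" using s by blast
      fix v assume "(sc c u1, v) \<in> T"
      then have "v = sc c v1" using cop_sv[OF cop_T _ s] by blast
      then show "x' v = y' (sc c u1)" using p v cdualD(2)[OF xy(1)] cdualD(2)[OF xy(2)] unfolding P_def by simp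
    qed
  next
    fix u assume "u \<in> Gen"
    then obtain x e where e: "e \<in> B" "f * e \<in> B" "(x,u) \<in> \<Phi> e" unfolding Gen_def by blast
    obtain z where z: "(x', z) \<in> adj sc (\<Phi> (f * e))" "(y', z) \<in> adj sc (\<Phi> e)" using h[OF e(1,2)] by blast
    have ue: "u = opfun (\<Phi> e) x" using bop_eq[OF B_bop[OF e(1)] e(3)] by simp
    have c: "(u, opfun (\<Phi> (f * e)) x) \<in> T" using E_comp[OF e(1,2)] ue by simp
    show "P u" unfolding P_def
    proof (intro conjI allI impI)
      show "u \<in> Domain T" using c by blast
      fix v assume "(u,v) \<in> T"
      then have "v = opfun (\<Phi> (f * e)) x" using cop_sv[OF cop_T _ c] by blast
      then have "x' v = z x" using z(1) bop_in[OF B_bop[OF e(2)]] unfolding adj_def by blast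
      moreover have "y' u = z x" using z(2) e(3) unfolding adj_def by blast
      ultimately show "x' v = y' u" by simp
    qed
  qed
  show "(x', y') \<in> adj sc TD" unfolding adj_def using xy PD unfolding P_def by blast
next
  fix x' y' assume a: "(x', y') \<in> adj sc TD"
  then have xy: "x' \<in> cdual sc" "y' \<in> cdual sc" "\<And>u v. (u,v) \<in> TD \<Longrightarrow> x' v = y' u"
    unfolding adj_def by blast+
  have "\<exists>z. (x', z) \<in> adj sc (\<Phi> (f * e)) \<and> (y', z) \<in> adj sc (\<Phi> e)" if e: "e \<in> B" "f * e \<in> B" for e
  proof (intro exI conjI)
    let ?z = "\<lambda>x. y' (opfun (\<Phi> e) x)"
    have zc: "?z \<in> cdual sc" using bop_comp_dual[OF B_bop[OF e(1)] xy(2)] .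
    show "(y', ?z) \<in> adj sc (\<Phi> e)" unfolding adj_def using xy(2) zc bop_eq[OF B_bop[OF e(1)]] by auto
    show "(x', ?z) \<in> adj sc (\<Phi> (f * e))" unfolding adj_def
    proof (safe intro!: xy(1) zc)
      fix x w assume "(x, w) \<in> \<Phi> (f * e)"
      then have "w = opfun (\<Phi> (f*e)) x" using bop_eq[OF B_bop[OF e(2)]] by simp
      moreover have "(opfun (\<Phi> e) x, opfun (\<Phi> (f*e)) x) \<in> TD"
        using E_comp[OF e] Gen_opfun[OF e] Gen_D by blast
      ultimately show "x' w = y' (opfun (\<Phi> e) x)" using xy(3) by simp
    qed
  qed
  then show "(x', y') \<in> dual_op sc \<Phi> f" unfolding dual_op_def using xy(1,2) by blast
qed

end

context opctx
begin

lemma TD_add: "(u1,v1)\<in>TD \<Longrightarrow> (u2,v2)\<in>TD \<Longrightarrow> (u1+u2, v1+v2)\<in>TD"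
  using cop_add[OF cop_T] D_add by blast
lemma TD_sc: "(u,v)\<in>TD \<Longrightarrow> (sc c u, sc c v)\<in>TD"
  using cop_sc[OF cop_T] D_sc by blast
lemma TD_zero: "(0,0)\<in>TD" using cop_zero[OF cop_T] D_zero by blast
lemma TD_diff: "(u1,v1)\<in>TD \<Longrightarrow> (u2,v2)\<in>TD \<Longrightarrow> (u1-u2, v1-v2)\<in>TD"
  using TD_add[of u1 v1 "-u2" "-v2"] TD_sc[of u2 v2 "-1"] by (simp add: sc_neg1)
lemma TD_padd: assumes "z1 \<in> TD" "z2 \<in> TD" shows "z1 + z2 \<in> TD"
proof -
  obtain a b c d where "z1 = (a,b)" "z2 = (c,d)" by (cases z1, cases z2) simp
  then show ?thesis using TD_add[of a b c d] assms by simp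
qed
lemma TD_pscaleR: "z \<in> TD \<Longrightarrow> r *\<^sub>R z \<in> TD"
  using TD_sc[of "fst z" "snd z" "complex_of_real r"] by (simp add: sc_real scaleR_prod_def)

lemma adj_anti: "R \<subseteq> S \<Longrightarrow> adj sc S \<subseteq> adj sc R"
  unfolding adj_def by blast


end
context opctx
begin
lemma core_iff: "adj sc T = adj sc TD \<longleftrightarrow> closure TD = T"
proof
  assume cl: "closure TD = T"
  have "adj sc TD \<subseteq> adj sc T"
  proof safe
    fix x' y' assume a: "(x', y') \<in> adj sc TD"
    then have xy: "x' \<in> cdual sc" "y' \<in> cdual sc" "\<And>u v. (u,v) \<in> TD \<Longrightarrow> x' v = y' u"
      unfolding adj_def by blast+
    define Z where "Z = {z::'x\<times>'x. x' (snd z) = y' (fst z)}"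
    have c1: "continuous_on UNIV (\<lambda>z::'x\<times>'x. x' (snd z))"
      by (rule continuous_on_compose2[OF cdual_cont[OF xy(1)] continuous_on_snd[OF continuous_on_id]]) simp
    have c2: "continuous_on UNIV (\<lambda>z::'x\<times>'x. y' (fst z))"
      by (rule continuous_on_compose2[OF cdual_cont[OF xy(2)] continuous_on_fst[OF continuous_on_id]]) simp
    have "closed Z" unfolding Z_def by (rule closed_Collect_eq[OF c1 c2])
    moreover have "TD \<subseteq> Z" unfolding Z_def using xy(3) by auto
    ultimately have "closure TD \<subseteq> Z" by (rule closure_minimal[rotated])
    then have "T \<subseteq> Z" using cl by simp
    then show "(x', y') \<in> adj sc T" unfolding adj_def Z_def using xy(1,2) by auto
  qed
  moreover have "adj sc T \<subseteq> adj sc TD" by (rule adj_anti) blast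
  ultimately show "adj sc T = adj sc TD" by blast
next
  assume eq: "adj sc T = adj sc TD"
  have sub: "closure TD \<subseteq> T" by (rule closure_minimal[OF _ cop_closed[OF cop_T]]) blast
  have "T \<subseteq> closure TD"
  proof
    fix pq assume pqT: "pq \<in> T"
    obtain p q where pq: "pq = (p,q)" by (cases pq) simp
    show "pq \<in> closure TD"
    proof (rule ccontr)
      assume npq: "pq \<notin> closure TD"
      have "\<exists>G::'x\<times>'x \<Rightarrow> real. bounded_linear G \<and> (\<forall>x\<in>closure TD. G x = 0) \<and> G pq = 1"
      proof (rule separation[OF closed_closure _ _ _ npq])
        have "0 \<in> TD" by (subst zero_prod_def) (rule TD_zero)
        then show "0 \<in> closure TD" by (rule subsetD[OF closure_subset])
        show "x + y \<in> closure TD" if "x \<in> closure TD" "y \<in> closure TD" for x y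
          using closure_add_closed[OF TD_padd that] .
        show "r *\<^sub>R x \<in> closure TD" if "x \<in> closure TD" for r x
          using closure_scaleR_closed[OF TD_pscaleR that] .
      qed
      then obtain G :: "'x\<times>'x \<Rightarrow> real" where G: "bounded_linear G" "\<And>x. x \<in> closure TD \<Longrightarrow> G x = 0" "G pq = 1"
        by blast
      interpret G: bounded_linear G by (rule G(1))
      define G1 where "G1 x = G (x, 0)" for x
      define G2 where "G2 y = G (0, y)" for y
      have b1: "bounded_linear G1" unfolding G1_def
        by (rule bounded_linear_compose[OF G(1) bounded_linear_Pair[OF bounded_linear_ident bounded_linear_zero]])
      have b2: "bounded_linear G2" unfolding G2_def
        by (rule bounded_linear_compose[OF G(1) bounded_linear_Pair[OF bounded_linear_zero bounded_linear_ident]])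
      have split: "G (u, v) = G1 u + G2 v" for u v
      proof -
        have "G ((u, 0) + (0, v)) = G (u, 0) + G (0, v)" by (rule G.add)
        then show ?thesis unfolding G1_def G2_def by simp
      qed
      obtain K1 where K1: "\<And>x. \<bar>G1 x\<bar> \<le> K1 * norm x" using bl_real_bound[OF b1] by blast
      obtain K2 where K2: "\<And>x. \<bar>G2 x\<bar> \<le> K2 * norm x" using bl_real_bound[OF b2] by blast
      note c1 = complexify[OF b1 K1] and c2 = complexify[OF b2 K2]
      have van: "cpx G1 u + cpx G2 v = 0" if "(u,v) \<in> TD" for u v
      proof -
        have "G (u, v) = 0" by (rule G(2)[OF subsetD[OF closure_subset that]])
        moreover have "G (sc \<i> u, sc \<i> v) = 0" by (rule G(2)[OF subsetD[OF closure_subset TD_sc[OF that]]])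
        ultimately have z: "G1 u + G2 v = 0" "G1 (sc \<i> u) + G2 (sc \<i> v) = 0" unfolding split by simp_all
        have "cpx G1 u + cpx G2 v = complex_of_real (G1 u + G2 v) - \<i> * complex_of_real (G1 (sc \<i> u) + G2 (sc \<i> v))"
          unfolding cpx_def by (simp add: algebra_simps)
        then show ?thesis unfolding z by simp
      qed
      define \<psi> where "\<psi> x = (-1) * cpx G1 x" for x
      have psi: "\<psi> \<in> cdual sc" unfolding \<psi>_def by (rule cdual_smul[OF c1(1)])
      have "(cpx G2, \<psi>) \<in> adj sc TD" unfolding adj_def
      proof (intro CollectI case_prodI conjI allI impI c2(1) psi)
        fix u v assume "(u, v) \<in> TD"
        then have "cpx G1 u + cpx G2 v = 0" by (rule van)
        then show "cpx G2 v = \<psi> u" unfolding \<psi>_def by (simp only: add_eq_0_iff) simp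
      qed
      then have "(cpx G2, \<psi>) \<in> adj sc T" using eq by simp
      then have "cpx G2 q = \<psi> p" using pqT unfolding pq adj_def by blast
      then have "Re (cpx G2 q) = - Re (cpx G1 p)" unfolding \<psi>_def by simp
      then have "G2 q + G1 p = 0" using c1(2) c2(2) by simp
      then have "G pq = 0" using split pq by simp
      then show False using G(3) by simp
    qed
  qed
  then show "closure TD = T" using sub by blast
qed


end
context opctx
begin
lemma bounded_closure:
  assumes bT: "bounded_op sc T" shows "closure TD = T"
proof -
  have sub: "closure TD \<subseteq> T" by (rule closure_minimal[OF _ cop_closed[OF cop_T]]) blast
  have "(x,y) \<in> closure TD" if xy: "(x,y) \<in> T" for x y
  proof -
    have "x \<in> closure D" using D_dense by simp
    then obtain d where d: "\<forall>n. d n \<in> D" "d \<longlonglongrightarrow> x" unfolding closure_sequential by blast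
    have bl: "bounded_linear (opfun T)" by (rule bop_bl[OF bT])
    have "(\<lambda>n. opfun T (d n)) \<longlonglongrightarrow> opfun T x" by (rule bounded_linear.tendsto[OF bl d(2)])
    define dd where "dd n = (d n, opfun T (d n))" for n
    have "dd \<longlonglongrightarrow> (x, y)" unfolding dd_def
      using bop_eq[OF bT xy] d(2) \<open>(\<lambda>n. opfun T (d n)) \<longlonglongrightarrow> opfun T x\<close> by (simp add: tendsto_Pair)
    moreover have "\<forall>n. dd n \<in> TD" unfolding dd_def using d(1) bop_in[OF bT] by blast
    ultimately show ?thesis unfolding closure_sequential by blast
  qed
  then show ?thesis using sub by auto
qed

lemma bounded_adj_dop:
  assumes bT: "bounded_op sc T" shows "bounded_dop sc (adj sc T)"
proof -
  obtain K where K: "K \<ge> 0" "\<And>x. norm (opfun T x) \<le> K * norm x" using bop_bound[OF bT] by blast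
  have adjI: "(x', y') \<in> adj sc T \<longleftrightarrow> x' \<in> cdual sc \<and> y' \<in> cdual sc \<and> (\<forall>x. y' x = x' (opfun T x))" for x' y'
  proof
    assume "(x', y') \<in> adj sc T"
    then have h: "x' \<in> cdual sc" "y' \<in> cdual sc" "\<And>u v. (u,v) \<in> T \<Longrightarrow> x' v = y' u"
      unfolding adj_def by blast+
    have "y' x = x' (opfun T x)" for x using h(3)[OF bop_in[OF bT, of x]] by simp
    then show "x' \<in> cdual sc \<and> y' \<in> cdual sc \<and> (\<forall>x. y' x = x' (opfun T x))" using h by blast
  next
    assume "x' \<in> cdual sc \<and> y' \<in> cdual sc \<and> (\<forall>x. y' x = x' (opfun T x))"
    then show "(x', y') \<in> adj sc T" unfolding adj_def using bop_eq[OF bT] by fastforce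
  qed
  show ?thesis unfolding bounded_dop_def
  proof (intro conjI allI impI)
    show "adj sc T \<subseteq> cdual sc \<times> cdual sc" unfolding adj_def by blast
    show "Domain (adj sc T) = cdual sc"
    proof
      show "Domain (adj sc T) \<subseteq> cdual sc" unfolding adj_def by blast
      show "cdual sc \<subseteq> Domain (adj sc T)"
      proof
        fix x' assume x': "x' \<in> cdual sc"
        have "(x', \<lambda>x. x' (opfun T x)) \<in> adj sc T" unfolding adjI using x' bop_comp_dual[OF bT x'] by blast
        then show "x' \<in> Domain (adj sc T)" by blast
      qed
    qed
  next
    fix x' y' u' v' assume a: "(x', y') \<in> adj sc T" "(u', v') \<in> adj sc T"
    then have h: "x' \<in> cdual sc" "y' \<in> cdual sc" "\<forall>x. y' x = x' (opfun T x)"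
      "u' \<in> cdual sc" "v' \<in> cdual sc" "\<forall>x. v' x = u' (opfun T x)" unfolding adjI by blast+
    show "(\<lambda>x. x' x + u' x, \<lambda>x. y' x + v' x) \<in> adj sc T"
      unfolding adjI
    proof (intro conjI allI)
      show "(\<lambda>x. x' x + u' x) \<in> cdual sc" by (rule cdual_add[OF h(1) h(4)])
      show "(\<lambda>x. y' x + v' x) \<in> cdual sc" by (rule cdual_add[OF h(2) h(5)])
      show "y' x + v' x = x' (opfun T x) + u' (opfun T x)" for x using h(3,6) by simp
    qed
  next
    fix c x' y' assume a: "(x', y') \<in> adj sc T"
    then have h: "x' \<in> cdual sc" "y' \<in> cdual sc" "\<forall>x. y' x = x' (opfun T x)"
      unfolding adjI by blast+
    show "(\<lambda>x. c * x' x, \<lambda>x. c * y' x) \<in> adj sc T"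
      unfolding adjI
    proof (intro conjI allI)
      show "(\<lambda>x. c * x' x) \<in> cdual sc" by (rule cdual_smul[OF h(1)])
      show "(\<lambda>x. c * y' x) \<in> cdual sc" by (rule cdual_smul[OF h(2)])
      show "c * y' x = c * x' (opfun T x)" for x using h(3) by simp
    qed
  next
    fix y' assume a: "(\<lambda>_. 0, y') \<in> adj sc T"
    then show "y' = (\<lambda>_. 0)" unfolding adjI by auto
  next
    show "\<exists>K. \<forall>x' y'. (x', y') \<in> adj sc T \<longrightarrow> dnorm y' \<le> K * dnorm x'"
    proof (intro exI allI impI)
      fix x' y' assume a: "(x', y') \<in> adj sc T"
      then have xy: "x' \<in> cdual sc" "\<And>x. y' x = x' (opfun T x)" unfolding adjI by auto
      show "dnorm y' \<le> K * dnorm x'"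
      proof (rule dnorm_le)
        fix x :: 'x assume nx: "norm x \<le> 1"
        have "cmod (y' x) \<le> dnorm x' * norm (opfun T x)" unfolding xy(2) by (rule dnorm_bound[OF xy(1)])
        also have "\<dots> \<le> dnorm x' * (K * norm x)" by (rule mult_left_mono[OF K(2) dnorm_nonneg[OF xy(1)]])
        also have "\<dots> \<le> dnorm x' * K"
          using mult_left_le[OF nx K(1)] dnorm_nonneg[OF xy(1)] by (rule mult_left_mono)
        finally show "cmod (y' x) \<le> K * dnorm x'" by (simp add: mult.commute)
      qed
    qed
  qed
qed

end

context opctx
begin

lemma TD_bound:
  assumes bd: "bounded_dop sc (adj sc TD)"
  obtains K0 where "K0 \<ge> 0" "\<And>u v. (u,v) \<in> TD \<Longrightarrow> norm v \<le> K0 * norm u"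
proof -
  have dom: "Domain (adj sc TD) = cdual sc" using bd unfolding bounded_dop_def by (elim conjE)
  obtain K where K: "\<And>x' y'. (x', y') \<in> adj sc TD \<Longrightarrow> dnorm y' \<le> K * dnorm x'"
    using bd unfolding bounded_dop_def by (elim conjE) blast
  define K0 where "K0 = max K 0"
  have K0: "K0 \<ge> 0" unfolding K0_def by simp
  have "norm v \<le> K0 * norm u" if uv: "(u,v) \<in> TD" for u v
  proof -
    obtain Gn :: "'x \<Rightarrow> real" where Gn: "bounded_linear Gn" "Gn v = norm v" "\<And>x. \<bar>Gn x\<bar> \<le> norm x"
      using norming_real[of v] by blast
    have Gn1: "\<bar>Gn x\<bar> \<le> 1 * norm x" for x using Gn(3) by simp
    note cx = complexify[OF Gn(1) Gn1]
    have dphi: "dnorm (cpx Gn) \<le> 1"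
    proof (rule dnorm_le)
      fix x :: 'x assume "norm x \<le> 1"
      then show "cmod (cpx Gn x) \<le> 1" using cx(3)[of x] by simp
    qed
    have "cpx Gn \<in> Domain (adj sc TD)" using dom cx(1) by simp
    then obtain \<psi> where psi: "(cpx Gn, \<psi>) \<in> adj sc TD" by blast
    then have pc: "\<psi> \<in> cdual sc" "cpx Gn v = \<psi> u" using uv unfolding adj_def by blast+
    have "dnorm \<psi> \<le> K * dnorm (cpx Gn)" by (rule K[OF psi])
    also have "\<dots> \<le> K0 * dnorm (cpx Gn)"
      by (rule mult_right_mono) (simp_all add: K0_def dnorm_nonneg[OF cx(1)])
    also have "\<dots> \<le> K0 * 1" by (rule mult_left_mono[OF dphi K0])
    finally have dpsi: "dnorm \<psi> \<le> K0" by simp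
    have "norm v = Re (cpx Gn v)" using cx(2)[of v] Gn(2) by simp
    also have "\<dots> \<le> cmod (cpx Gn v)" by (rule complex_Re_le_cmod)
    also have "\<dots> = cmod (\<psi> u)" using pc(2) by simp
    also have "\<dots> \<le> dnorm \<psi> * norm u" by (rule dnorm_bound[OF pc(1)])
    also have "\<dots> \<le> K0 * norm u" by (rule mult_right_mono[OF dpsi norm_ge_zero])
    finally show ?thesis .
  qed
  then show ?thesis using that K0 by blast
qed

lemma dop_bounded:
  assumes bd: "bounded_dop sc (adj sc TD)" shows "bounded_op sc T"
proof -
  obtain K0 where K0: "K0 \<ge> 0" "\<And>u v. (u,v) \<in> TD \<Longrightarrow> norm v \<le> K0 * norm u"
    using TD_bound[OF bd] by blast
  have ex: "\<exists>y. (x,y) \<in> T \<and> norm y \<le> K0 * norm x" for x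
  proof -
    have "x \<in> closure D" using D_dense by simp
    then obtain d where d: "\<forall>n. d n \<in> D" "d \<longlonglongrightarrow> x" unfolding closure_sequential by blast
    define v where "v n = (SOME w. (d n, w) \<in> T)" for n
    have vT: "(d n, v n) \<in> T" for n
    proof -
      have "d n \<in> Domain T" using d(1) D_dom by blast
      then obtain w where "(d n, w) \<in> T" by blast
      then show ?thesis unfolding v_def by (rule someI)
    qed
    have vTD: "(d n, v n) \<in> TD" for n using vT d(1) by blast
    have "Cauchy v"
    proof (rule CauchyI)
      fix e :: real assume e: "0 < e"
      have "Cauchy d" using d(2) by (rule LIMSEQ_imp_Cauchy)
      moreover have "0 < e / (K0 + 1)" using e K0(1) by simp
      ultimately obtain M where M: "\<forall>m\<ge>M. \<forall>n\<ge>M. norm (d m - d n) < e / (K0 + 1)"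
        using CauchyD by blast
      have "norm (v m - v n) < e" if "m \<ge> M" "n \<ge> M" for m n
      proof -
        have "norm (v m - v n) \<le> K0 * norm (d m - d n)" using K0(2)[OF TD_diff[OF vTD vTD]] .
        also have "\<dots> \<le> K0 * (e / (K0 + 1))" using M that K0(1) by (intro mult_left_mono) (auto intro: less_imp_le)
        also have "\<dots> < e" using e K0(1) by (simp add: field_simps)
        finally show ?thesis .
      qed
      then show "\<exists>M. \<forall>m\<ge>M. \<forall>n\<ge>M. norm (v m - v n) < e" by blast
    qed
    then obtain y where y: "v \<longlonglongrightarrow> y" using Cauchy_convergent_iff convergent_def by blast
    have "(\<lambda>n. (d n, v n)) \<longlonglongrightarrow> (x, y)" using d(2) y by (rule tendsto_Pair)
    then have xyT: "(x, y) \<in> T" by (rule closed_sequentially[OF cop_closed[OF cop_T] vT])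
    have "norm y \<le> K0 * norm x"
    proof (rule tendsto_le[OF _ _ tendsto_norm[OF y]])
      show "(\<lambda>n. K0 * norm (d n)) \<longlonglongrightarrow> K0 * norm x" using d(2) by (intro tendsto_mult_left tendsto_norm)
      show "\<forall>\<^sub>F n in sequentially. norm (v n) \<le> K0 * norm (d n)" using K0(2)[OF vTD] by simp
    qed simp
    then show ?thesis using xyT by blast
  qed
  show ?thesis unfolding bounded_op_def
  proof (intro conjI cop_T)
    show "Domain T = UNIV" using ex by blast
    have "norm y \<le> K0 * norm x" if "(x, y) \<in> T" for x y
    proof -
      obtain y' where "(x, y') \<in> T" "norm y' \<le> K0 * norm x" using ex by blast
      moreover have "y' = y" using cop_sv[OF cop_T calculation(1) that] .
      ultimately show ?thesis by simp
    qed
    then show "\<exists>K. \<forall>x y. (x, y) \<in> T \<longrightarrow> norm y \<le> K * norm x" by blast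
  qed
qed

end

theorem theorem8p1:
  fixes sc :: "complex \<Rightarrow> 'x::banach \<Rightarrow> 'x"
    and smF :: "complex \<Rightarrow> 'f::ring_1 \<Rightarrow> 'f"
    and \<Phi> :: "'f \<Rightarrow> ('x \<times> 'x) set"
    and f :: 'f
  assumes "cbanach sc"
    and "calgebra smF"
    and "proto_calculus sc smF \<Phi>"
    and "dual_calculus sc smF \<Phi>"
    and "f \<in> dual_dom sc \<Phi>"
  shows "closure (Dset sc \<Phi> f) = UNIV \<and> Dset sc \<Phi> f \<subseteq> Domain (\<Phi> f)
    \<and> adj sc (\<Phi> f) \<subseteq> dual_op sc \<Phi> f
         \<and> (adj sc (\<Phi> f) = dual_op sc \<Phi> f \<longleftrightarrow> is_core (Dset sc \<Phi> f) (\<Phi> f))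
    \<and> (bounded_op sc (\<Phi> f) \<longleftrightarrow> bounded_dop sc (dual_op sc \<Phi> f))
         \<and> (bounded_op sc (\<Phi> f) \<longrightarrow> dual_op sc \<Phi> f = adj sc (\<Phi> f))"
proof -
  interpret O: opctx sc smF \<Phi> f
    by (intro opctx.intro cbx.intro opctx_axioms.intro assms(1,3,4,5))
  have e1: "dual_op sc \<Phi> f = adj sc (\<Phi> f \<inter> (Dset sc \<Phi> f \<times> UNIV))" by (rule O.dual_eq_adjTD)
  have core: "(adj sc (\<Phi> f) = dual_op sc \<Phi> f) \<longleftrightarrow> is_core (Dset sc \<Phi> f) (\<Phi> f)"
    unfolding is_core_def e1 using O.core_iff O.D_dom by blast
  have bd1: "bounded_op sc (\<Phi> f) \<Longrightarrow> dual_op sc \<Phi> f = adj sc (\<Phi> f)"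
    unfolding e1 using O.core_iff O.bounded_closure by simp
  have bd2: "bounded_op sc (\<Phi> f) \<longleftrightarrow> bounded_dop sc (dual_op sc \<Phi> f)"
  proof
    assume b: "bounded_op sc (\<Phi> f)"
    show "bounded_dop sc (dual_op sc \<Phi> f)" unfolding bd1[OF b] by (rule O.bounded_adj_dop[OF b])
  next
    assume "bounded_dop sc (dual_op sc \<Phi> f)"
    then show "bounded_op sc (\<Phi> f)" unfolding e1 by (rule O.dop_bounded)
  qed
  show ?thesis using O.D_dense O.D_dom O.adj_sub_dual core bd1 bd2 by blast
qed


end
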